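(* Let $n'$ be an odd positive integer and $q\ge 3$. There exists an ordering of all words of $\mathbb{Z}_q^{n'}$ in which consecutive words have Lee distance $1$, beginning with $(0,0,\ldots,0)$ and ending with $(1,1,\ldots,1)$.
   Context: Lee distance between $v,u\in\mathbb{Z}_q^{n'}$ is $\sum_{i}\min\{|v_i-u_i|,q-|v_i-u_i|\}$, entries regarded as integers in $\{0,\ldots,q-1\}$. *)

theory Defs
  imports Main
begin

definition words :: "nat \<Rightarrow> nat \<Rightarrow> nat list set" where
  "words q n = {w. length w = n \<and> (\<forall>i<n. w ! i < q)}"

definition lee_dist :: "nat \<Rightarrow> nat list \<Rightarrow> nat list \<Rightarrow> nat" where
  "lee_dist q v u = (\<Sum>i<length v. min (nat \<bar>int (v ! i) - int (u ! i)\<bar>)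
                                       (q - nat \<bar>int (v ! i) - int (u ! i)\<bar>))"

end

theory Submission
  imports Defs
begin

definition d1 :: "nat \<Rightarrow> nat \<Rightarrow> nat \<Rightarrow> nat" where
  "d1 q x y = min (nat \<bar>int x - int y\<bar>) (q - nat \<bar>int x - int y\<bar>)"

lemma lee_nil[simp]: "lee_dist q [] u = 0"
  by (simp add: lee_dist_def)

lemma lee_cons[simp]: "lee_dist q (x # v) (y # u) = d1 q x y + lee_dist q v u"
  unfolding lee_dist_def d1_def length_Cons sum.lessThan_Suc_shift by simp

lemma lee_append:
  "length v = length v' \<Longrightarrow> lee_dist q (v @ w) (v' @ w') = lee_dist q v v' + lee_dist q w w'"
proof (induction v arbitrary: v')
  case Nil then show ?case by simp
next
  case (Cons x v) then show ?case by (cases v') auto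
qed

lemma d1_self[simp]: "d1 q x x = 0" by (simp add: d1_def)
lemma d1_sym: "d1 q x y = d1 q y x" by (simp add: d1_def abs_minus_commute)

lemma lee_self[simp]: "lee_dist q v v = 0"
  by (induction v) auto

lemma lee_sym: "length v = length u \<Longrightarrow> lee_dist q v u = lee_dist q u v"
proof (induction v arbitrary: u)
  case Nil then show ?case by (cases u) auto
next
  case (Cons x v) then show ?case by (cases u) (auto simp: d1_sym)
qed

definition adj :: "nat \<Rightarrow> nat list \<Rightarrow> nat list \<Rightarrow> bool" where
  "adj q u v \<longleftrightarrow> length u = length v \<and> lee_dist q u v = 1"

lemma adj_sym: "adj q u v \<Longrightarrow> adj q v u"
  unfolding adj_def using lee_sym by metis

definition hp :: "nat \<Rightarrow> nat \<Rightarrow> nat list list \<Rightarrow> nat list \<Rightarrow> nat list \<Rightarrow> bool" where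
  "hp q n ws s t \<longleftrightarrow> distinct ws \<and> set ws = words q n \<and> successively (adj q) ws
     \<and> ws \<noteq> [] \<and> hd ws = s \<and> last ws = t"

lemma hp_rev: "hp q n ws s t \<Longrightarrow> hp q n (rev ws) t s"
  unfolding hp_def by (auto simp: hd_rev last_rev adj_sym elim: successively_mono)

lemma adj_app1: "adj q v v' \<Longrightarrow> adj q (v @ w) (v' @ w)"
  unfolding adj_def by (simp add: lee_append)


lemma adj_app2: "adj q w w' \<Longrightarrow> adj q (v @ w) (v @ w')"
  unfolding adj_def by (simp add: lee_append)

lemma words_app: "v \<in> words q a \<Longrightarrow> w \<in> words q b \<Longrightarrow> v @ w \<in> words q (a + b)"
  unfolding words_def by (auto simp: nth_append)

lemma words_split: "u \<in> words q (a + b) \<Longrightarrow> take a u \<in> words q a \<and> drop a u \<in> words q b"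
  unfolding words_def by auto

lemma words_len: "v \<in> words q a \<Longrightarrow> length v = a"
  unfolding words_def by auto

fun comb :: "('b \<Rightarrow> 'a \<Rightarrow> nat list) \<Rightarrow> 'a list list \<Rightarrow> 'b list \<Rightarrow> nat list list" where
  "comb f (Q # Qs) (w # ws) = map (f w) Q @ comb f Qs ws"
| "comb f _ _ = []"

locale prodf =
  fixes q :: nat and A :: "'a set" and B :: "'b set" and C :: "nat list set"
    and adjA :: "'a \<Rightarrow> 'a \<Rightarrow> bool" and adjB :: "'b \<Rightarrow> 'b \<Rightarrow> bool"
    and f :: "'b \<Rightarrow> 'a \<Rightarrow> nat list"
  assumes inj: "w \<in> B \<Longrightarrow> w' \<in> B \<Longrightarrow> v \<in> A \<Longrightarrow> v' \<in> A \<Longrightarrow> f w v = f w' v' \<Longrightarrow> w = w' \<and> v = v'"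
    and img: "(\<Union>w\<in>B. f w ` A) = C"
    and adjw: "adjB w w' \<Longrightarrow> v \<in> A \<Longrightarrow> adj q (f w v) (f w' v)"
    and adjv: "adjA v v' \<Longrightarrow> w \<in> B \<Longrightarrow> adj q (f w v) (f w v')"
begin

lemma comb_set:
  "length Qs = length P \<Longrightarrow> \<forall>Q\<in>set Qs. set Q = A \<Longrightarrow> set (comb f Qs P) = (\<Union>w\<in>set P. f w ` A)"
proof (induction P arbitrary: Qs)
  case Nil then show ?case by simp
next
  case (Cons w P) then show ?case by (cases Qs) auto
qed

lemma comb_distinct:
  "length Qs = length P \<Longrightarrow> \<forall>Q\<in>set Qs. set Q = A \<and> distinct Q \<Longrightarrow> distinct P \<Longrightarrow> set P \<subseteq> B
   \<Longrightarrow> distinct (comb f Qs P)"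
proof (induction P arbitrary: Qs)
  case Nil then show ?case by simp
next
  case (Cons w P)
  then obtain Q Qs' where Qs: "Qs = Q # Qs'" by (cases Qs) auto
  have s: "set (comb f Qs' P) = (\<Union>w\<in>set P. f w ` A)"
    using Cons.prems Qs by (intro comb_set) auto
  have wP: "w \<notin> set P" "w \<in> B" "set P \<subseteq> B" "set Q = A" "distinct Q" using Cons.prems Qs by auto
  have "inj_on (f w) (set Q)"
  proof (rule inj_onI)
    fix x y assume "x \<in> set Q" "y \<in> set Q" "f w x = f w y"
    then show "x = y" using inj[of w w x y] wP by auto
  qed
  then have "distinct (map (f w) Q)" using wP by (simp add: distinct_map)
  moreover have "set (map (f w) Q) \<inter> set (comb f Qs' P) = {}"
  proof (rule ccontr)
    assume "set (map (f w) Q) \<inter> set (comb f Qs' P) \<noteq> {}"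
    then obtain v w' v' where "v \<in> A" "w' \<in> set P" "v' \<in> A" "f w v = f w' v'"
      unfolding s using wP by auto
    then have "w = w'" using inj[of w w' v v'] wP by auto
    then show False using wP \<open>w' \<in> set P\<close> by simp
  qed
  moreover have "distinct (comb f Qs' P)"
    using Cons Qs by auto
  ultimately show ?case using Qs by simp
qed

lemma comb_hd:
  "length Qs = length P \<Longrightarrow> P \<noteq> [] \<Longrightarrow> \<forall>Q\<in>set Qs. Q \<noteq> [] \<Longrightarrow> comb f Qs P \<noteq> [] \<and> hd (comb f Qs P) = f (hd P) (hd (hd Qs))"
  by (cases P; cases Qs) (auto simp: hd_map)

lemma comb_last:
  "length Qs = length P \<Longrightarrow> P \<noteq> [] \<Longrightarrow> \<forall>Q\<in>set Qs. Q \<noteq> [] \<Longrightarrow> last (comb f Qs P) = f (last P) (last (last Qs))"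
proof (induction P arbitrary: Qs)
  case Nil then show ?case by simp
next
  case (Cons w P)
  then obtain Q Qs' where Qs: "Qs = Q # Qs'" by (cases Qs) auto
  show ?case
  proof (cases P)
    case Nil then show ?thesis using Cons.prems Qs by (auto simp: last_map)
  next
    case (Cons w' P')
    then have "comb f Qs' P \<noteq> []" using comb_hd[of Qs' P] Cons.prems Qs by auto
    then show ?thesis using Cons.IH[of Qs'] Cons.prems Qs \<open>P = w' # P'\<close> by auto
  qed
qed

lemma comb_succ:
  "length Qs = length P \<Longrightarrow> \<forall>Q\<in>set Qs. Q \<noteq> [] \<and> set Q \<subseteq> A \<and> successively adjA Q \<Longrightarrow> set P \<subseteq> B
   \<Longrightarrow> successively adjB P \<Longrightarrow> successively (\<lambda>Q Q'. last Q = hd Q') Qs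
   \<Longrightarrow> successively (adj q) (comb f Qs P)"
proof (induction P arbitrary: Qs)
  case Nil then show ?case by simp
next
  case (Cons w P)
  then obtain Q Qs' where Qs: "Qs = Q # Qs'" by (cases Qs) auto
  have m: "successively (adj q) (map (f w) Q)"
    using Cons.prems Qs adjv by (auto simp: successively_map elim!: successively_mono)
  show ?case
  proof (cases P)
    case Nil then show ?thesis using m Qs by simp
  next
    case (Cons w' P')
    then obtain Q' Qs'' where Qs': "Qs' = Q' # Qs''" using Cons.prems Qs by (cases Qs') auto
    have h: "comb f Qs' P \<noteq> [] \<and> hd (comb f Qs' P) = f w' (hd Q')"
      using comb_hd[of Qs' P] Cons.prems Qs Qs' \<open>P = w' # P'\<close> by auto
    have "last Q = hd Q'" using Cons.prems Qs Qs' by auto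
    moreover have "Q \<noteq> []" "last Q \<in> A" using Cons.prems Qs by auto
    ultimately have "adj q (last (map (f w) Q)) (hd (comb f Qs' P))"
      using h adjw Cons.prems \<open>P = w' # P'\<close> by (auto simp: last_map)
    moreover have "successively (adj q) (comb f Qs' P)"
      using Cons.IH[of Qs'] Cons.prems Qs \<open>P = w' # P'\<close> by (auto simp: successively_Cons)
    ultimately show ?thesis using m Qs \<open>P = w' # P'\<close> by (simp add: successively_append_iff)
  qed
qed

end

context prodf begin
lemma comb_ok:
  assumes "distinct P" "set P = B" "successively adjB P" "P \<noteq> []" "length Qs = length P"
    "\<forall>Q\<in>set Qs. distinct Q \<and> set Q = A \<and> successively adjA Q \<and> Q \<noteq> []"
    "successively (\<lambda>Q Q'. last Q = hd Q') Qs"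
  shows "distinct (comb f Qs P) \<and> set (comb f Qs P) = C \<and> successively (adj q) (comb f Qs P)
    \<and> comb f Qs P \<noteq> [] \<and> hd (comb f Qs P) = f (hd P) (hd (hd Qs))
    \<and> last (comb f Qs P) = f (last P) (last (last Qs))"
proof -
  have "distinct (comb f Qs P)" using assms by (intro comb_distinct) auto
  moreover have "set (comb f Qs P) = C" using assms img comb_set[of Qs P] by auto
  moreover have "successively (adj q) (comb f Qs P)" using assms by (intro comb_succ) auto
  moreover have "comb f Qs P \<noteq> [] \<and> hd (comb f Qs P) = f (hd P) (hd (hd Qs))"
    using assms by (intro comb_hd) auto
  moreover have "last (comb f Qs P) = f (last P) (last (last Qs))"
    using assms by (intro comb_last) auto
  ultimately show ?thesis by blast
qed
end

definition hpany :: "nat \<Rightarrow> nat \<Rightarrow> nat list list \<Rightarrow> bool" where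
  "hpany q n Q \<longleftrightarrow> distinct Q \<and> set Q = words q n \<and> successively (adj q) Q \<and> Q \<noteq> []"

lemma hp_any: "hp q n Q s t \<Longrightarrow> hpany q n Q"
  unfolding hp_def hpany_def by auto

lemma app_inj: "w \<in> words q b \<Longrightarrow> w' \<in> words q b \<Longrightarrow> v \<in> words q a \<Longrightarrow> v' \<in> words q a
   \<Longrightarrow> v @ w = v' @ w' \<Longrightarrow> w = w' \<and> v = v'"
  using words_len by (metis append_eq_append_conv)

lemma app_img1: "(\<Union>v\<in>words q a. (\<lambda>w. v @ w) ` words q b) = words q (a + b)"
proof
  show "(\<Union>v\<in>words q a. (\<lambda>w. v @ w) ` words q b) \<subseteq> words q (a + b)"
    using words_app by blast
  show "words q (a + b) \<subseteq> (\<Union>v\<in>words q a. (\<lambda>w. v @ w) ` words q b)"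
  proof
    fix u assume "u \<in> words q (a + b)"
    then have "take a u \<in> words q a" "drop a u \<in> words q b" "u = take a u @ drop a u"
      using words_split by auto
    then show "u \<in> (\<Union>v\<in>words q a. (\<lambda>w. v @ w) ` words q b)" by blast
  qed
qed

lemma app_img2: "(\<Union>w\<in>words q b. (\<lambda>v. v @ w) ` words q a) = words q (a + b)"
proof
  show "(\<Union>w\<in>words q b. (\<lambda>v. v @ w) ` words q a) \<subseteq> words q (a + b)"
    using words_app by blast
  show "words q (a + b) \<subseteq> (\<Union>w\<in>words q b. (\<lambda>v. v @ w) ` words q a)"
  proof
    fix u assume "u \<in> words q (a + b)"
    then have "take a u \<in> words q a" "drop a u \<in> words q b" "u = take a u @ drop a u"
      using words_split by auto
    then show "u \<in> (\<Union>w\<in>words q b. (\<lambda>v. v @ w) ` words q a)" by blast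
  qed
qed

lemma hpL1:
  assumes "hp q a P s t" "length Qs = length P" "\<forall>Q\<in>set Qs. hpany q b Q"
    "successively (\<lambda>Q Q'. last Q = hd Q') Qs"
  shows "hp q (a + b) (comb (\<lambda>v w. v @ w) Qs P) (s @ hd (hd Qs)) (t @ last (last Qs))"
proof -
  interpret prodf q "words q b" "words q a" "words q (a + b)" "adj q" "adj q" "\<lambda>v w. v @ w"
    apply unfold_locales
    subgoal using app_inj by blast
    subgoal by (rule app_img1)
    subgoal by (rule adj_app1)
    subgoal by (rule adj_app2)
    done
  show ?thesis using comb_ok[of P Qs] assms unfolding hp_def hpany_def by auto
qed

lemma hpL2:
  assumes "hp q b P s t" "length Qs = length P" "\<forall>Q\<in>set Qs. hpany q a Q"
    "successively (\<lambda>Q Q'. last Q = hd Q') Qs"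
  shows "hp q (a + b) (comb (\<lambda>w v. v @ w) Qs P) (hd (hd Qs) @ s) (last (last Qs) @ t)"
proof -
  interpret prodf q "words q a" "words q b" "words q (a + b)" "adj q" "adj q" "\<lambda>w v. v @ w"
    apply unfold_locales
    subgoal using app_inj by blast
    subgoal by (rule app_img2)
    subgoal by (rule adj_app2)
    subgoal by (rule adj_app1)
    done
  show ?thesis using comb_ok[of P Qs] assms unfolding hp_def hpany_def by auto
qed

definition alt :: "nat \<Rightarrow> 'a \<Rightarrow> 'a \<Rightarrow> 'a list" where
  "alt k X Y = map (\<lambda>i. if even i then X else Y) [0..<k]"

lemma alt_len[simp]: "length (alt k X Y) = k" by (simp add: alt_def)
lemma alt_nil[simp]: "alt k X Y = [] \<longleftrightarrow> k = 0" by (simp add: alt_def)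
lemma alt_set: "set (alt k X Y) \<subseteq> {X, Y}" by (auto simp: alt_def)
lemma alt_hd: "k > 0 \<Longrightarrow> hd (alt k X Y) = X" by (simp add: alt_def hd_map)
lemma alt_last: "k > 0 \<Longrightarrow> last (alt k X Y) = (if even (k - 1) then X else Y)"
  by (simp add: alt_def last_map)
lemma alt_succ: "last X = hd Y \<Longrightarrow> last Y = hd X \<Longrightarrow> successively (\<lambda>Q Q'. last Q = hd Q') (alt k X Y)"
  by (auto simp: successively_conv_nth alt_def nth_append)

definition R1 :: "nat \<Rightarrow> nat list list" where
  "R1 q = map (\<lambda>i. [if i = 0 then 0 else q - i]) [0..<q]"

lemma words1: "words q 1 = {[k] | k. k < q}"
  unfolding words_def by (auto simp: length_Suc_conv)

lemma R1_hp: assumes "q \<ge> 2" shows "hp q 1 (R1 q) [0] [1]"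
proof -
  have "inj_on (\<lambda>i. [if i = 0 then 0 else q - i]) {0..<q}"
    by (rule inj_onI) (auto split: if_splits)
  then have d: "distinct (R1 q)" by (simp add: R1_def distinct_map)
  have s: "set (R1 q) = words q 1"
  proof
    show "set (R1 q) \<subseteq> words q 1" unfolding words1 R1_def using assms by auto
    show "words q 1 \<subseteq> set (R1 q)"
    proof
      fix u assume "u \<in> words q 1"
      then obtain k where k: "u = [k]" "k < q" unfolding words1 by auto
      show "u \<in> set (R1 q)"
      proof (cases "k = 0")
        case True then show ?thesis using k assms unfolding R1_def by (auto intro!: image_eqI[of _ _ 0])
      next
        case False then show ?thesis using k unfolding R1_def by (auto intro!: image_eqI[of _ _ "q - k"])
      qed
    qed
  qed
  have "successively (adj q) (R1 q)"
    unfolding successively_conv_nth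
  proof (intro allI impI)
    fix i assume i: "Suc i < length (R1 q)"
    then have iq: "Suc i < q" by (simp add: R1_def)
    have "d1 q (if i = 0 then 0 else q - i) (q - Suc i) = 1"
      using iq unfolding d1_def by (auto simp: of_nat_diff)
    then show "adj q (R1 q ! i) (R1 q ! Suc i)"
      using iq unfolding R1_def adj_def by (cases "i = 0") (simp_all del: upt_Suc)
  qed
  moreover have "R1 q \<noteq> []" "hd (R1 q) = [0]" "last (R1 q) = [1]"
    using assms by (auto simp: R1_def hd_map last_map)
  ultimately show ?thesis using d s unfolding hp_def by auto
qed

lemma card_words: "card (words q n) = q ^ n"
proof -
  have "words q n = {xs. set xs \<subseteq> {..<q} \<and> length xs = n}"
    unfolding words_def by (auto simp: in_set_conv_nth subset_iff)
  then show ?thesis using card_lists_length_eq[of "{..<q}" n] by simp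
qed

lemma hp_ne: "hp q n P s t \<Longrightarrow> P \<noteq> [] \<and> hd P = s \<and> last P = t"
  unfolding hp_def by auto

lemma alt_any: "hpany q n X \<Longrightarrow> hpany q n Y \<Longrightarrow> \<forall>Q\<in>set (alt k X Y). hpany q n Q"
  unfolding alt_def by auto

lemma odd_case:
  assumes "odd q" "q \<ge> 3" "n \<ge> 1"
  shows "\<exists>P. hp q n P (replicate n 0) (replicate n 1)"
  using assms(3)
proof (induction n rule: nat_induct_at_least)
  case base
  then show ?case using R1_hp[of q] assms by auto
next
  case (Suc n)
  then obtain P where P: "hp q n P (replicate n 0) (replicate n 1)" by blast
  define Qs where "Qs = alt q P (rev P)"
  have ne: "P \<noteq> []" "hd P = replicate n 0" "last P = replicate n 1" using hp_ne[OF P] by auto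
  have R: "hp q 1 (R1 q) [0] [1]" using R1_hp assms by auto
  have "hp q (1 + n) (comb (\<lambda>v w. v @ w) Qs (R1 q)) ([0] @ hd (hd Qs)) ([1] @ last (last Qs))"
  proof (rule hpL1[OF R])
    show "length Qs = length (R1 q)" by (simp add: Qs_def R1_def)
    show "\<forall>Q\<in>set Qs. hpany q n Q" unfolding Qs_def
      by (rule alt_any) (use P hp_rev hp_any in blast)+
    show "successively (\<lambda>Q Q'. last Q = hd Q') Qs" unfolding Qs_def
      using ne by (intro alt_succ) (auto simp: hd_rev last_rev)
  qed
  moreover have "hd Qs = P" "last Qs = P" using assms unfolding Qs_def
    by (auto simp: alt_hd alt_last)
  ultimately show ?case using ne by auto
qed

lemma A2: assumes "even q" "q \<ge> 2" shows "\<exists>A. hp q 2 A [0,0] [1,0]"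
proof -
  have R: "hp q 1 (R1 q) [0] [1]" using R1_hp assms by auto
  note ne = hp_ne[OF R]
  define Qs where "Qs = alt q (R1 q) (rev (R1 q))"
  have "hp q (1 + 1) (comb (\<lambda>v w. v @ w) Qs (R1 q)) ([0] @ hd (hd Qs)) ([1] @ last (last Qs))"
  proof (rule hpL1[OF R])
    show "length Qs = length (R1 q)" by (simp add: Qs_def R1_def)
    show "\<forall>Q\<in>set Qs. hpany q 1 Q" unfolding Qs_def
      by (rule alt_any) (use R hp_rev hp_any in blast)+
    show "successively (\<lambda>Q Q'. last Q = hd Q') Qs" unfolding Qs_def
      using ne by (intro alt_succ) (auto simp: hd_rev last_rev)
  qed
  moreover have "hd Qs = R1 q" "last Qs = rev (R1 q)" using assms unfolding Qs_def
    by (auto simp: alt_hd alt_last)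
  ultimately have "hp q 2 (comb (\<lambda>v w. v @ w) Qs (R1 q)) [0,0] [1,0]" using ne by (simp add: last_rev numeral_2_eq_2)
  then show ?thesis by blast
qed

lemma B2: assumes "even q" "q \<ge> 2" shows "\<exists>B. hp q 2 B [1,0] [1,1]"
proof -
  have R: "hp q 1 (R1 q) [0] [1]" using R1_hp assms by auto
  note ne = hp_ne[OF R]
  define Qs where "Qs = alt q (rev (R1 q)) (R1 q)"
  have "hp q (1 + 1) (comb (\<lambda>w v. v @ w) Qs (R1 q)) (hd (hd Qs) @ [0]) (last (last Qs) @ [1])"
  proof (rule hpL2[OF R])
    show "length Qs = length (R1 q)" by (simp add: Qs_def R1_def)
    show "\<forall>Q\<in>set Qs. hpany q 1 Q" unfolding Qs_def
      by (rule alt_any) (use R hp_rev hp_any in blast)+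
    show "successively (\<lambda>Q Q'. last Q = hd Q') Qs" unfolding Qs_def
      using ne by (intro alt_succ) (auto simp: hd_rev last_rev)
  qed
  moreover have "hd Qs = rev (R1 q)" "last Qs = R1 q" using assms unfolding Qs_def
    by (auto simp: alt_hd alt_last)
  ultimately have "hp q 2 (comb (\<lambda>w v. v @ w) Qs (R1 q)) [1,0] [1,1]" using ne by (simp add: hd_rev numeral_2_eq_2)
  then show ?thesis by blast
qed

lemma even_case:
  assumes "even q" "q \<ge> 2"
  shows "\<exists>P. hp q (Suc (2 * m)) P (replicate (Suc (2 * m)) 0) (replicate (Suc (2 * m)) 1)"
proof (induction m)
  case 0
  then show ?case using R1_hp[of q] assms by auto
next
  case (Suc m)
  define n where "n = Suc (2 * m)"
  obtain P where P: "hp q n P (replicate n 0) (replicate n 1)" using Suc.IH unfolding n_def by blast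
  obtain A where A: "hp q 2 A [0,0] [1,0]" using A2 assms by blast
  obtain B where B: "hp q 2 B [1,0] [1,1]" using B2 assms by blast
  have ne: "P \<noteq> []" "hd P = replicate n 0" "last P = replicate n 1" using hp_ne[OF P] by auto
  note neA = hp_ne[OF A] and neB = hp_ne[OF B]
  have lenP: "length P = q ^ n" using P card_words[of q n] distinct_card[of P] unfolding hp_def by auto
  have n0: "n > 0" unfolding n_def by simp
  have "q ^ n \<ge> q" using assms n0 by (simp add: self_le_power)
  moreover have "even (q ^ n)" using assms n0 by simp
  ultimately have N: "length P - 1 > 0" "odd (length P - 1)" using lenP assms by auto
  define Qs where "Qs = alt (length P - 1) A (rev A) @ [B]"
  have "hp q (2 + n) (comb (\<lambda>w v. v @ w) Qs P) (hd (hd Qs) @ replicate n 0) (last (last Qs) @ replicate n 1)"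
  proof (rule hpL2[OF P])
    show "length Qs = length P" using N by (simp add: Qs_def)
    have "\<forall>Q\<in>set (alt (length P - 1) A (rev A)). hpany q 2 Q"
      by (rule alt_any) (use A hp_rev hp_any in blast)+
    then show "\<forall>Q\<in>set Qs. hpany q 2 Q" unfolding Qs_def using B hp_any by auto
    have l: "last (alt (length P - 1) A (rev A)) = A" using N by (simp add: alt_last)
    have "successively (\<lambda>Q Q'. last Q = hd Q') (alt (length P - 1) A (rev A))"
      using neA by (intro alt_succ) (auto simp: hd_rev last_rev)
    then show "successively (\<lambda>Q Q'. last Q = hd Q') Qs" unfolding Qs_def
      using N l neA neB by (auto simp: successively_append_iff)
  qed
  moreover have "hd Qs = A" "last Qs = B" using N unfolding Qs_def
    by (auto simp: alt_hd hd_append alt_nil)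
  ultimately have H: "hp q (2 + n) (comb (\<lambda>w v. v @ w) Qs P) (replicate (2 + n) 0) (replicate (2 + n) 1)"
    using neA neB by (simp add: numeral_2_eq_2)
  have eq: "2 + n = Suc (2 * Suc m)" unfolding n_def by simp
  have "hp q (Suc (2 * Suc m)) (comb (\<lambda>w v. v @ w) Qs P) (replicate (Suc (2 * Suc m)) 0) (replicate (Suc (2 * Suc m)) 1)"
    using H unfolding eq .
  then show ?case by (rule exI)
qed

theorem lemma3:
  fixes n q :: nat
  assumes "odd n" and "n > 0" and "q \<ge> 3"
  shows "\<exists>ws :: nat list list.
           distinct ws \<and> set ws = words q n \<and>
           (\<forall>j. Suc j < length ws \<longrightarrow> lee_dist q (ws ! j) (ws ! Suc j) = 1) \<and>
           hd ws = replicate n 0 \<and> last ws = replicate n 1"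
proof -
  have "\<exists>P. hp q n P (replicate n 0) (replicate n 1)"
  proof (cases "odd q")
    case True then show ?thesis by (intro odd_case) (use True assms in auto)
  next
    case False
    then have eq: "even q" "q \<ge> 2" using assms by auto
    obtain m where nm: "n = Suc (2 * m)" using assms(1) by (auto elim!: oddE)
    show ?thesis unfolding nm by (rule even_case[OF eq])
  qed
  then obtain P where P: "hp q n P (replicate n 0) (replicate n 1)" by blast
  then have h: "distinct P" "set P = words q n" "successively (adj q) P"
    "hd P = replicate n 0" "last P = replicate n 1" unfolding hp_def by auto
  have "\<forall>j. Suc j < length P \<longrightarrow> lee_dist q (P ! j) (P ! Suc j) = 1"
    using successively_nth[OF h(3)] unfolding adj_def by blast
  then show ?thesis using h by blast
qed

end
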